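(* There is an absolute constant $c>0$ such that for every $\alpha\in(0,1/2]$ there exist a distribution $\mathcal D$ over $\mathcal X\times\{A,B\}\times\{0,1\}$, a hypothesis class $\mathcal H$ with an optimal Equalized-Odds-constrained classifier $h^*\in\mathcal H$ on $\mathcal D$, and a distribution $\mathcal Q$ such that, with $\widetilde{\mathcal D}=(1-\alpha)\mathcal D+\alpha\mathcal Q$, every (possibly randomized) hypothesis $h$ that satisfies Equalized Odds on $\widetilde{\mathcal D}$ satisfies $\Pr_{\mathcal D}[h(x,z)\ne y]\ge\Pr_{\mathcal D}[h^*(x,z)\ne y]+c$. In words: for a learner maximizing accuracy subject to Equalized Odds, an adversary with corruption fraction $\alpha$ can force an additional $\Omega(1)$ accuracy loss compared with the optimal fair classifier on the true distribution.
   Context: Examples are triples (features $x$, group $z\in\{A,B\}$, label $y\in\{0,1\}$); hypotheses may depend on the group. A hypothesis $h$ satisfies Equalized Odds on a distribution if $\Pr[h=1\mid y=1,z=A]=\Pr[h=1\mid y=1,z=B]$ and $\Pr[h=1\mid y=0,z=A]=\Pr[h=1\mid y=0,z=B]$. $h^*$ minimizes $\Pr_{\mathcal D}[h\ne y]$ over $h\in\mathcal H$ satisfying Equalized Odds on $\mathcal D$. *)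

theory Defs
  imports "HOL-Probability.Probability"
begin

datatype grp = GA | GB

text \<open>A (possibly randomized) hypothesis maps (features, group) to the probability
  of predicting label 1 (True). Deterministic hypotheses take values in {0,1}.\<close>
type_synonym 'x hyp = "'x \<times> grp \<Rightarrow> real"

definition randomized_hyp :: "'x hyp \<Rightarrow> bool" where
  "randomized_hyp h \<longleftrightarrow> (\<forall>p. 0 \<le> h p \<and> h p \<le> 1)"

definition accept_rate :: "('x \<times> grp \<times> bool) pmf \<Rightarrow> 'x hyp \<Rightarrow> bool \<Rightarrow> grp \<Rightarrow> real" where
  "accept_rate D h y z =
     measure_pmf.expectation D (\<lambda>(x, z', y'). if y' = y \<and> z' = z then h (x, z') else 0)
     / measure_pmf.prob D {(x, z', y'). y' = y \<and> z' = z}"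

definition equalized_odds :: "('x \<times> grp \<times> bool) pmf \<Rightarrow> 'x hyp \<Rightarrow> bool" where
  "equalized_odds D h \<longleftrightarrow>
     accept_rate D h True GA = accept_rate D h True GB \<and>
     accept_rate D h False GA = accept_rate D h False GB"

definition err :: "('x \<times> grp \<times> bool) pmf \<Rightarrow> 'x hyp \<Rightarrow> real" where
  "err D h = measure_pmf.expectation D (\<lambda>(x, z, y). if y then 1 - h (x, z) else h (x, z))"

definition optimal_EO :: "'x hyp set \<Rightarrow> ('x \<times> grp \<times> bool) pmf \<Rightarrow> 'x hyp \<Rightarrow> bool" where
  "optimal_EO H D hs \<longleftrightarrow> hs \<in> H \<and> equalized_odds D hs \<and>
     (\<forall>h\<in>H. equalized_odds D h \<longrightarrow> err D hs \<le> err D h)"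

text \<open>(1 - \<alpha>) D + \<alpha> Q.\<close>
definition mixture :: "real \<Rightarrow> 'a pmf \<Rightarrow> 'a pmf \<Rightarrow> 'a pmf" where
  "mixture \<alpha> D Q = bind_pmf (bernoulli_pmf \<alpha>) (\<lambda>b. if b then Q else D)"

end

theory Submission
  imports Defs
begin

lemma E_fin:
  assumes "set_pmf M \<subseteq> A" "finite A"
  shows "measure_pmf.expectation M f = (\<Sum>a\<in>A. f a * pmf M a)"
  using assms by (intro integral_measure_pmf_real) auto

lemma P_fin:
  assumes "set_pmf M \<subseteq> A" "finite A"
  shows "measure_pmf.prob M S = (\<Sum>a\<in>A. indicator S a * pmf M a)"
proof -
  have "measure_pmf.prob M S = measure_pmf.expectation M (indicator S)" by simp
  also have "\<dots> = (\<Sum>a\<in>A. indicator S a * pmf M a)" using assms by (rule E_fin)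
  finally show ?thesis .
qed

definition A5 :: "(nat \<times> grp \<times> bool) set" where
  "A5 = {(0,GA,False), (1,GA,True), (0,GB,False), (1,GB,True), (1,GA,False)}"

definition Dl :: "real \<Rightarrow> ((nat \<times> grp \<times> bool) \<times> real) list" where
  "Dl a = [((0,GA,False), a/4), ((1,GA,True), a/4), ((0,GB,False), 1/2 - a/4), ((1,GB,True), 1/2 - a/4)]"

lemma Dl_wf: "0 < a \<Longrightarrow> a \<le> 1/2 \<Longrightarrow> pmf_of_list_wf (Dl a)"
  unfolding pmf_of_list_wf_def Dl_def by auto

lemma pmf_D: "0 < a \<Longrightarrow> a \<le> 1/2 \<Longrightarrow> pmf (pmf_of_list (Dl a)) x =
   (if x = (0,GA,False) then a/4 else if x = (1,GA,True) then a/4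
    else if x = (0,GB,False) then 1/2 - a/4 else if x = (1,GB,True) then 1/2 - a/4 else 0)"
  by (simp add: pmf_pmf_of_list Dl_wf) (simp add: Dl_def)

lemma set_D: "0 < a \<Longrightarrow> a \<le> 1/2 \<Longrightarrow> set_pmf (pmf_of_list (Dl a)) \<subseteq> A5"
  using set_pmf_of_list[OF Dl_wf] unfolding A5_def Dl_def by auto

lemma pmf_mix: "0 \<le> a \<Longrightarrow> a \<le> 1 \<Longrightarrow> pmf (mixture a D Q) x = a * pmf Q x + (1 - a) * pmf D x"
  unfolding mixture_def pmf_bind by simp

lemma set_mix: assumes "0 < a" "a \<le> 1/2"
  shows "set_pmf (mixture a (pmf_of_list (Dl a)) (return_pmf (1,GA,False))) \<subseteq> A5"
proof
  fix x assume "x \<in> set_pmf (mixture a (pmf_of_list (Dl a)) (return_pmf (1,GA,False)))"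
  then have "pmf (mixture a (pmf_of_list (Dl a)) (return_pmf (1,GA,False))) x \<noteq> 0"
    by (simp add: set_pmf_eq)
  then show "x \<in> A5" using assms by (auto simp: pmf_mix pmf_D A5_def split: if_splits simp: indicator_def)
qed

lemma finA5: "finite A5" by (simp add: A5_def)

lemma sumA5: "(\<Sum>a\<in>A5. f a) = f (0,GA,False) + f (1,GA,True) + f (0,GB,False) + f (1,GB,True) + f (1,GA,False)"
  unfolding A5_def by (simp add: algebra_simps)

lemma errD: assumes "0 < a" "a \<le> 1/2"
  shows "err (pmf_of_list (Dl a)) h = a/4 * (1 - h (1,GA)) + a/4 * h (0,GA)
     + (1/2 - a/4) * (1 - h (1,GB)) + (1/2 - a/4) * h (0,GB)"
  using assms
  unfolding err_def E_fin[OF set_D[OF assms] finA5] by (simp add: sumA5 pmf_D algebra_simps)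

lemma rateD: assumes "0 < a" "a \<le> 1/2"
  shows "accept_rate (pmf_of_list (Dl a)) h True GA = h (1,GA)"
        "accept_rate (pmf_of_list (Dl a)) h True GB = h (1,GB)"
        "accept_rate (pmf_of_list (Dl a)) h False GA = h (0,GA)"
        "accept_rate (pmf_of_list (Dl a)) h False GB = h (0,GB)"
  using assms
  by (simp_all add: accept_rate_def E_fin[OF set_D[OF assms] finA5]
      P_fin[OF set_D[OF assms] finA5] sumA5 pmf_D)

lemma rateM: assumes "0 < a" "a \<le> 1/2"
  shows "accept_rate (mixture a (pmf_of_list (Dl a)) (return_pmf (1,GA,False))) h True GA = h (1,GA)"
        "accept_rate (mixture a (pmf_of_list (Dl a)) (return_pmf (1,GA,False))) h True GB = h (1,GB)"
        "accept_rate (mixture a (pmf_of_list (Dl a)) (return_pmf (1,GA,False))) h False GA =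
          ((1-a)*(a/4) * h (0,GA) + a * h (1,GA)) / ((1-a)*(a/4) + a)"
        "accept_rate (mixture a (pmf_of_list (Dl a)) (return_pmf (1,GA,False))) h False GB = h (0,GB)"
  using assms
  unfolding accept_rate_def E_fin[OF set_mix[OF assms] finA5]
      P_fin[OF set_mix[OF assms] finA5]
  by (simp_all add: sumA5 pmf_D pmf_mix)

lemma posD: assumes "0 < a" "a \<le> 1/2"
  shows "measure_pmf.prob (pmf_of_list (Dl a)) {(x, z', y'). y' = y \<and> z' = z} > 0"
  unfolding P_fin[OF set_D[OF assms] finA5]
  using assms by (cases y; cases z) (simp_all add: sumA5 pmf_D)

lemma key:
  fixes a p a0 b0 :: real
  assumes "0 < a" "a \<le> 1/2" "0 \<le> p" "p \<le> 1" "0 \<le> a0" "0 \<le> b0"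
    and eq: "b0 = ((1-a)*(a/4) * a0 + a * p) / ((1-a)*(a/4) + a)"
  shows "a/4 * (1 - p) + a/4 * a0 + (1/2 - a/4) * (1 - p) + (1/2 - a/4) * b0 \<ge> 1/8"
proof -
  have d: "(1-a)*(a/4) + a > 0" using assms by (simp add: mult_nonneg_nonneg add_nonneg_pos)
  have "b0 * ((1-a)*(a/4) + a) = (1-a)*(a/4) * a0 + a * p" using eq d by simp
  hence "b0 * ((1-a)*(a/4) + a) \<ge> a * p" using assms by (simp add: mult_nonneg_nonneg)
  moreover have "b0 * ((1-a)*(a/4) + a) \<le> b0 * (2*a)"
    using assms by (intro mult_left_mono) (auto simp: algebra_simps)
  ultimately have "a * p \<le> b0 * (2 * a)" by linarith
  hence "a * p \<le> a * (2 * b0)" by (simp add: algebra_simps)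
  hence b: "p \<le> 2 * b0" using assms(1) by (rule mult_left_le_imp_le)
  have "(1/2 - a/4) * (1 - p) + (1/2 - a/4) * b0 \<ge> (1/2 - a/4) * (1 - p/2)"
  proof -
    have "(1/2 - a/4) * (p/2) \<le> (1/2 - a/4) * b0"
      using b assms(1,2) by (intro mult_left_mono) auto
    moreover have "(1/2 - a/4) * (1 - p) + (1/2 - a/4) * (p/2) = (1/2 - a/4) * (1 - p/2)"
      by (simp add: field_simps)
    ultimately show ?thesis by linarith
  qed
  moreover have "(1/2 - a/4) * (1 - p/2) \<ge> 3/8 * (1/2)"
    using assms by (intro mult_mono) auto
  moreover have "a/4 * (1 - p) \<ge> 0" "a/4 * a0 \<ge> 0" using assms by auto
  ultimately show ?thesis by linarith
qed

theorem mainTheorem9: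
  shows "\<exists>c::real. c > 0 \<and>
    (\<forall>\<alpha>::real. 0 < \<alpha> \<and> \<alpha> \<le> 1/2 \<longrightarrow>
      (\<exists>(D :: (nat \<times> grp \<times> bool) pmf) (H :: nat hyp set) hs Q.
          (\<forall>y z. measure_pmf.prob D {(x, z', y'). y' = y \<and> z' = z} > 0) \<and>
          (\<forall>h\<in>H. randomized_hyp h) \<and>
          optimal_EO H D hs \<and>
          (\<forall>h. randomized_hyp h \<and> equalized_odds (mixture \<alpha> D Q) h \<longrightarrow>
               err D h \<ge> err D hs + c)))"
proof (intro exI[of _ "1/8"] conjI allI impI)
  fix a :: real assume "0 < a \<and> a \<le> 1/2"
  hence a: "0 < a" "a \<le> 1/2" by auto
  define hs :: "nat hyp" where "hs = (\<lambda>(x,z). if x = 1 then 1 else 0)"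
  have hs0: "err (pmf_of_list (Dl a)) hs = 0" using a by (simp add: errD hs_def)
  have hsEO: "equalized_odds (pmf_of_list (Dl a)) hs"
    using a by (simp add: equalized_odds_def rateD hs_def)
  have P4: "\<forall>h. randomized_hyp h \<and> equalized_odds (mixture a (pmf_of_list (Dl a)) (return_pmf (1::nat,GA,False))) h
      \<longrightarrow> err (pmf_of_list (Dl a)) h \<ge> err (pmf_of_list (Dl a)) hs + 1/8"
  proof (intro allI impI)
    fix h assume h: "randomized_hyp h \<and> equalized_odds (mixture a (pmf_of_list (Dl a)) (return_pmf (1,GA,False))) h"
    have r: "\<And>p. 0 \<le> h p \<and> h p \<le> 1" using h unfolding randomized_hyp_def by blast
    have e1: "h (1,GB) = h (1,GA)" and e2: "h (0,GB) = ((1-a)*(a/4) * h (0,GA) + a * h (1,GA)) / ((1-a)*(a/4) + a)"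
    proof -
      have c: "h (1,GA) = h (1,GB) \<and> ((1-a)*(a/4) * h (0,GA) + a * h (1,GA)) / ((1-a)*(a/4) + a) = h (0,GB)"
        using h unfolding equalized_odds_def rateM[OF a] by blast
      then show "h (1,GB) = h (1,GA)" by simp
      show "h (0,GB) = ((1-a)*(a/4) * h (0,GA) + a * h (1,GA)) / ((1-a)*(a/4) + a)" using conjunct2[OF c] by (rule sym)
    qed
    have "a/4 * (1 - h (1,GA)) + a/4 * h (0,GA) + (1/2 - a/4) * (1 - h (1,GA)) + (1/2 - a/4) * h (0,GB) \<ge> 1/8"
      by (rule key[OF a(1) a(2) _ _ _ _ e2]) (use r in auto)
    thus "err (pmf_of_list (Dl a)) h \<ge> err (pmf_of_list (Dl a)) hs + 1/8"
      using a hs0 e1 by (simp add: errD)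
  qed
  have P1: "\<forall>y z. measure_pmf.prob (pmf_of_list (Dl a)) {(x, z', y'). y' = y \<and> z' = z} > 0"
    using posD[OF a] by blast
  have P2: "\<forall>h\<in>{hs}. randomized_hyp h" by (auto simp: randomized_hyp_def hs_def)
  have P3: "optimal_EO {hs} (pmf_of_list (Dl a)) hs" using hsEO by (simp add: optimal_EO_def)
  show "\<exists>(D :: (nat \<times> grp \<times> bool) pmf) (H :: nat hyp set) hs Q.
          (\<forall>y z. measure_pmf.prob D {(x, z', y'). y' = y \<and> z' = z} > 0) \<and>
          (\<forall>h\<in>H. randomized_hyp h) \<and>
          optimal_EO H D hs \<and>
          (\<forall>h. randomized_hyp h \<and> equalized_odds (mixture a D Q) h \<longrightarrow>
               err D h \<ge> err D hs + 1/8)"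
    using P1 P2 P3 P4 by blast
qed (simp)

end
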